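(* If $G$ is a split graph, then $\gamma_{\rm i}(G)=\alpha(G)$.
   Context: A graph is split if its vertex set can be partitioned into a clique and an independent set. $\alpha(G)$ is the independence number. Indicated domination game on $G$: two players, Dominator and Staller, alternate. In each round Dominator indicates a vertex $v$ not yet dominated by the vertices previously selected by Staller (a vertex dominates itself and its neighbors), and Staller must select a vertex of the closed neighborhood $N[v]$, adding it to a set $D$. The game ends when $D$ is a dominating set of $G$. Dominator wants to minimize $|D|$ and Staller to maximize it; the size of $D$ under optimal play of both is the indicated domination number $\gamma_{\rm i}(G)$. *)

theory Defs
  imports Main
begin

definition simple_graph :: "'a set \<Rightarrow> ('a \<Rightarrow> 'a \<Rightarrow> bool) \<Rightarrow> bool" where
  "simple_graph V E \<longleftrightarrow> finite V \<and> (\<forall>x y. E x y \<longrightarrow> x \<in> V \<and> y \<in> V)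
     \<and> (\<forall>x y. E x y \<longrightarrow> E y x) \<and> (\<forall>x. \<not> E x x)"

definition is_clique :: "('a \<Rightarrow> 'a \<Rightarrow> bool) \<Rightarrow> 'a set \<Rightarrow> bool" where
  "is_clique E K \<longleftrightarrow> (\<forall>x\<in>K. \<forall>y\<in>K. x \<noteq> y \<longrightarrow> E x y)"

definition is_independent :: "('a \<Rightarrow> 'a \<Rightarrow> bool) \<Rightarrow> 'a set \<Rightarrow> bool" where
  "is_independent E S \<longleftrightarrow> (\<forall>x\<in>S. \<forall>y\<in>S. \<not> E x y)"

definition split_graph :: "'a set \<Rightarrow> ('a \<Rightarrow> 'a \<Rightarrow> bool) \<Rightarrow> bool" where
  "split_graph V E \<longleftrightarrow> (\<exists>K I. K \<union> I = V \<and> K \<inter> I = {} \<and> is_clique E K \<and> is_independent E I)"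

definition independence_number :: "'a set \<Rightarrow> ('a \<Rightarrow> 'a \<Rightarrow> bool) \<Rightarrow> nat" where
  "independence_number V E = Max {card S | S. S \<subseteq> V \<and> is_independent E S}"

definition closed_nbhd :: "'a set \<Rightarrow> ('a \<Rightarrow> 'a \<Rightarrow> bool) \<Rightarrow> 'a \<Rightarrow> 'a set" where
  "closed_nbhd V E v = {u \<in> V. u = v \<or> E v u}"

definition dominated_by :: "('a \<Rightarrow> 'a \<Rightarrow> bool) \<Rightarrow> 'a set \<Rightarrow> 'a \<Rightarrow> bool" where
  "dominated_by E D x \<longleftrightarrow> x \<in> D \<or> (\<exists>d\<in>D. E d x)"

definition dominating :: "'a set \<Rightarrow> ('a \<Rightarrow> 'a \<Rightarrow> bool) \<Rightarrow> 'a set \<Rightarrow> bool" where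
  "dominating V E D \<longleftrightarrow> (\<forall>x\<in>V. dominated_by E D x)"

text \<open>Indicated domination game. \<open>dom_wins V E D k\<close>: from the position in which
Staller has selected the set D, Dominator has a strategy guaranteeing that the game
ends with at most k further selections, whatever Staller does.\<close>
inductive dom_wins :: "'a set \<Rightarrow> ('a \<Rightarrow> 'a \<Rightarrow> bool) \<Rightarrow> 'a set \<Rightarrow> nat \<Rightarrow> bool"
  for V E where
  finished: "dominating V E D \<Longrightarrow> dom_wins V E D k"
| indicate: "\<lbrakk>\<not> dominating V E D; v \<in> V; \<not> dominated_by E D v;
     \<forall>u\<in>closed_nbhd V E v. dom_wins V E (insert u D) k\<rbrakk>
     \<Longrightarrow> dom_wins V E D (Suc k)"

text \<open>The indicated domination number: the size of D under optimal play, i.e. the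
least number of selections Dominator can guarantee from the start of the game.
(The selected vertices are always new, so the number of selections equals |D|.)\<close>
definition indicated_domination_number :: "'a set \<Rightarrow> ('a \<Rightarrow> 'a \<Rightarrow> bool) \<Rightarrow> nat" where
  "indicated_domination_number V E = (LEAST k. dom_wins V E {} k)"

end

theory Submission
  imports Defs
begin

definition sp :: "'a set \<Rightarrow> ('a \<Rightarrow> 'a \<Rightarrow> bool) \<Rightarrow> 'a set \<Rightarrow> 'a set \<Rightarrow> bool" where
  "sp V E Kc Is \<longleftrightarrow> Kc \<union> Is = V \<and> Kc \<inter> Is = {} \<and> is_clique E Kc \<and> is_independent E Is"

lemma good_partition:
  assumes g: "simple_graph V E" and s: "sp V E Kc Is"
  shows "\<exists>K' I'. sp V E K' I' \<and> (\<forall>k\<in>K'. \<exists>x\<in>I'. E k x)"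
  using s
proof (induction "card Kc" arbitrary: Kc Is rule: less_induct)
  case less
  show ?case
  proof (cases "\<forall>k\<in>Kc. \<exists>x\<in>Is. E k x")
    case True then show ?thesis using less.prems by blast
  next
    case False
    then obtain k where k: "k \<in> Kc" "\<forall>x\<in>Is. \<not> E k x" by blast
    have "finite V" using g unfolding simple_graph_def by simp
    moreover have "Kc \<subseteq> V" using less.prems unfolding sp_def by auto
    ultimately have fin: "finite Kc" by (rule finite_subset[rotated])
    have sym: "\<And>x y. E x y \<Longrightarrow> E y x" and irr: "\<And>x. \<not> E x x"
      using g unfolding simple_graph_def by auto
    have "Kc \<union> Is = V" "Kc \<inter> Is = {}" "is_clique E Kc" "is_independent E Is"
      using less.prems unfolding sp_def by auto
    then have "sp V E (Kc - {k}) (insert k Is)"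
      using k sym irr unfolding sp_def is_clique_def is_independent_def by auto
    moreover have "card (Kc - {k}) < card Kc" using fin k(1)
      by (meson card_Diff1_less)
    ultimately show ?thesis using less.hyps by blast
  qed
qed

definition undom :: "('a \<Rightarrow> 'a \<Rightarrow> bool) \<Rightarrow> 'a set \<Rightarrow> 'a set \<Rightarrow> 'a set" where
  "undom E Is D = {x \<in> Is. \<not> dominated_by E D x}"

lemma upper:
  assumes g: "simple_graph V E" and s: "sp V E Kc Is" and nb: "\<forall>k\<in>Kc. \<exists>x\<in>Is. E k x"
  shows "D \<subseteq> V \<Longrightarrow> card (undom E Is D) \<le> n \<Longrightarrow> dom_wins V E D n"
proof (induction n arbitrary: D)
  have fin: "finite V" and sym: "\<And>x y. E x y \<Longrightarrow> E y x"
    using g unfolding simple_graph_def by auto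
  have finI: "finite Is" using fin s unfolding sp_def by auto
  have KI: "Kc \<union> Is = V" "Kc \<inter> Is = {}" "is_clique E Kc" "is_independent E Is"
    using s unfolding sp_def by auto
  have key: "dominating V E D" if DV: "D \<subseteq> V" and U: "undom E Is D = {}" for D
  proof (cases "D \<inter> Kc = {}")
    case True
    then have DI: "D \<subseteq> Is" using DV KI(1) by blast
    have ID: "Is \<subseteq> D"
    proof
      fix x assume x: "x \<in> Is"
      then have "dominated_by E D x" using U unfolding undom_def by blast
      then have "x \<in> D \<or> (\<exists>d\<in>D. E d x)" unfolding dominated_by_def .
      moreover have "\<not> E d x" if "d \<in> D" for d
        using KI(4) DI that x unfolding is_independent_def by blast
      ultimately show "x \<in> D" by blast
    qed
    show ?thesis unfolding dominating_def
    proof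
      fix y assume y: "y \<in> V"
      show "dominated_by E D y"
      proof (cases "y \<in> Is")
        case True then show ?thesis using ID unfolding dominated_by_def by blast
      next
        case False
        then have "y \<in> Kc" using y KI(1) by blast
        then obtain x where "x \<in> Is" "E y x" using nb by blast
        then have "x \<in> D" "E x y" using ID sym by auto
        then show ?thesis unfolding dominated_by_def by blast
      qed
    qed
  next
    case False
    then obtain d where d: "d \<in> D" "d \<in> Kc" by blast
    show ?thesis unfolding dominating_def
    proof
      fix y assume y: "y \<in> V"
      show "dominated_by E D y"
      proof (cases "y \<in> Is")
        case True then show ?thesis using U unfolding undom_def by blast
      next
        case False
        then have "y \<in> Kc" using y KI(1) by blast
        then have "y = d \<or> E d y" using d KI(3) unfolding is_clique_def by auto
        then show ?thesis using d unfolding dominated_by_def by blast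
      qed
    qed
  qed
  {
    case 0
    then have "undom E Is D = {}" using finI unfolding undom_def by auto
    then show ?case using key 0 by (intro dom_wins.finished) auto
  next
    case (Suc n)
    show ?case
    proof (cases "dominating V E D")
      case True then show ?thesis by (rule dom_wins.finished)
    next
      case False
      then obtain x where x: "x \<in> undom E Is D" using key Suc.prems by blast
      have xV: "x \<in> V" using x s unfolding undom_def sp_def by auto
      show ?thesis
      proof (rule dom_wins.indicate[OF False xV])
        show "\<not> dominated_by E D x" using x unfolding undom_def by auto
        show "\<forall>u\<in>closed_nbhd V E x. dom_wins V E (insert u D) n"
        proof
          fix u assume u: "u \<in> closed_nbhd V E x"
          have sub: "undom E Is (insert u D) \<subseteq> undom E Is D - {x}"
            using u sym unfolding undom_def closed_nbhd_def dominated_by_def by auto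
          have "card (undom E Is (insert u D)) \<le> card (undom E Is D - {x})"
            by (rule card_mono[OF _ sub]) (use finI in \<open>auto simp: undom_def\<close>)
          also have "\<dots> = card (undom E Is D) - 1" using x finI
            by (simp add: undom_def)
          finally have "card (undom E Is (insert u D)) \<le> n" using Suc.prems by linarith
          moreover have "insert u D \<subseteq> V" using u Suc.prems unfolding closed_nbhd_def by auto
          ultimately show "dom_wins V E (insert u D) n" using Suc.IH by blast
        qed
      qed
    qed
  }
qed

lemma lower:
  assumes g: "simple_graph V E" and s: "sp V E Kc Is" and nb: "\<forall>k\<in>Kc. \<exists>x\<in>Is. E k x"
  shows "dom_wins V E D k \<Longrightarrow> D \<subseteq> Is \<Longrightarrow> card (undom E Is D) \<le> k"
proof (induction rule: dom_wins.induct)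
  case (finished D k)
  then have "undom E Is D = {}" using s unfolding undom_def dominating_def sp_def by auto
  then show ?case by simp
next
  case (indicate D v k)
  have fin: "finite V" using g unfolding simple_graph_def by auto
  have finI: "finite Is" using fin s unfolding sp_def by auto
  obtain u where u: "u \<in> closed_nbhd V E v" "u \<in> Is"
  proof (cases "v \<in> Is")
    case True
    then show ?thesis using that indicate.hyps(2) unfolding closed_nbhd_def by auto
  next
    case False
    then have "v \<in> Kc" using indicate.hyps(2) s unfolding sp_def by auto
    then obtain x where "x \<in> Is" "E v x" using nb by blast
    then show ?thesis using that s unfolding closed_nbhd_def sp_def by auto
  qed
  have "card (undom E Is (insert u D)) \<le> k" using indicate.IH u indicate.prems by blast
  moreover have "undom E Is D - {u} \<subseteq> undom E Is (insert u D)"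
    using u s unfolding undom_def dominated_by_def sp_def is_independent_def by auto
  then have "card (undom E Is D - {u}) \<le> card (undom E Is (insert u D))"
    by (rule card_mono[rotated]) (use finI in \<open>auto simp: undom_def\<close>)
  moreover have "card (undom E Is D) \<le> card (undom E Is D - {u}) + 1"
    using finI by (cases "u \<in> undom E Is D") (auto simp: undom_def card_Diff_singleton)
  ultimately show ?case by linarith
qed

theorem proposition5p1:
  fixes V :: "'a set" and E :: "'a \<Rightarrow> 'a \<Rightarrow> bool"
  assumes "simple_graph V E" and "split_graph V E"
  shows "indicated_domination_number V E = independence_number V E"
proof -
  obtain K0 I0 where "sp V E K0 I0" using assms(2) unfolding split_graph_def sp_def by blast
  then obtain Kc Is where s: "sp V E Kc Is" and nb: "\<forall>k\<in>Kc. \<exists>x\<in>Is. E k x"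
    using good_partition[OF assms(1)] by blast
  have fin: "finite V" using assms(1) unfolding simple_graph_def by auto
  have finI: "finite Is" using fin s unfolding sp_def by auto
  have u0: "undom E Is {} = Is" unfolding undom_def dominated_by_def by auto
  have "indicated_domination_number V E = card Is"
    unfolding indicated_domination_number_def
  proof (rule Least_equality)
    show "dom_wins V E {} (card Is)" using upper[OF assms(1) s nb, of "{}" "card Is"] u0 by simp
    show "card Is \<le> y" if "dom_wins V E {} y" for y
      using lower[OF assms(1) s nb that] u0 by simp
  qed
  moreover have "independence_number V E = card Is"
    unfolding independence_number_def
  proof (rule Max_eqI)
    show "finite {card S |S. S \<subseteq> V \<and> is_independent E S}"
      using fin by simp
    show "card Is \<in> {card S |S. S \<subseteq> V \<and> is_independent E S}"
      using s unfolding sp_def by auto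
    fix y assume "y \<in> {card S |S. S \<subseteq> V \<and> is_independent E S}"
    then obtain S where S: "y = card S" "S \<subseteq> V" "is_independent E S" by blast
    have finS: "finite S" using S fin finite_subset by blast
    show "y \<le> card Is"
    proof (cases "S \<inter> Kc = {}")
      case True
      then have "S \<subseteq> Is" using S s unfolding sp_def by auto
      then show ?thesis using S finI card_mono by blast
    next
      case False
      then obtain k where k: "k \<in> S" "k \<in> Kc" by blast
      then obtain x where x: "x \<in> Is" "E k x" using nb by blast
      have KI: "Kc \<union> Is = V" "is_clique E Kc"
        using s unfolding sp_def by auto
      have "S - {k} \<subseteq> Is - {x}"
      proof
        fix z assume z: "z \<in> S - {k}"
        have "\<not> E k z" using S(3) k z unfolding is_independent_def by blast
        then have "z \<notin> Kc" using KI(2) k z unfolding is_clique_def by auto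
        then have "z \<in> Is" using z S(2) KI(1) by blast
        moreover have "z \<noteq> x" using S(3) k z x unfolding is_independent_def by blast
        ultimately show "z \<in> Is - {x}" by blast
      qed
      then have "card (S - {k}) \<le> card (Is - {x})" using finI by (simp add: card_mono)
      then show ?thesis using S k x finS finI
      proof -
        have "card (S - {k}) = card S - 1" using k finS by simp
        moreover have "card (Is - {x}) = card Is - 1" using x finI by simp
        moreover have "card S > 0" using k finS card_gt_0_iff by blast
        moreover have "card Is > 0" using x finI card_gt_0_iff by blast
        ultimately show ?thesis using S(1) \<open>card (S - {k}) \<le> card (Is - {x})\<close> by linarith
      qed
    qed
  qed
  ultimately show ?thesis by simp
qed

end
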